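(* Let $X$ be a cubic vertex-transitive graph such that both $1$ and $-1$ are simple eigenvalues of $X$. Then $X$ is bipartite.
   Context: Eigenvalues are those of the adjacency matrix. An eigenvalue is simple if its eigenspace is $1$-dimensional. *)

theory Defs
  imports "HOL-Analysis.Analysis"
begin

definition simple_graph :: "('a \<Rightarrow> 'a \<Rightarrow> bool) \<Rightarrow> bool" where
  "simple_graph E \<longleftrightarrow> (\<forall>x y. E x y \<longrightarrow> E y x) \<and> (\<forall>x. \<not> E x x)"

definition cubic :: "('a \<Rightarrow> 'a \<Rightarrow> bool) \<Rightarrow> bool" where
  "cubic E \<longleftrightarrow> (\<forall>v. card {w. E v w} = 3)"

definition graph_automorphism :: "('a \<Rightarrow> 'a \<Rightarrow> bool) \<Rightarrow> ('a \<Rightarrow> 'a) \<Rightarrow> bool" where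
  "graph_automorphism E \<sigma> \<longleftrightarrow> bij \<sigma> \<and> (\<forall>x y. E x y \<longleftrightarrow> E (\<sigma> x) (\<sigma> y))"

definition vertex_transitive :: "('a \<Rightarrow> 'a \<Rightarrow> bool) \<Rightarrow> bool" where
  "vertex_transitive E \<longleftrightarrow> (\<forall>u v. \<exists>\<sigma>. graph_automorphism E \<sigma> \<and> \<sigma> u = v)"

definition adjacency_matrix :: "('a::finite \<Rightarrow> 'a \<Rightarrow> bool) \<Rightarrow> real ^ 'a ^ 'a" where
  "adjacency_matrix E = (\<chi> i j. if E i j then 1 else 0)"

definition eigenspace :: "real ^ 'n ^ 'n \<Rightarrow> real \<Rightarrow> (real ^ 'n) set" where
  "eigenspace A c = {v. A *v v = c *\<^sub>R v}"

definition simple_eigenvalue :: "real ^ 'n ^ 'n \<Rightarrow> real \<Rightarrow> bool" where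
  "simple_eigenvalue A c \<longleftrightarrow> dim (eigenspace A c) = 1"

definition bipartite :: "('a \<Rightarrow> 'a \<Rightarrow> bool) \<Rightarrow> bool" where
  "bipartite E \<longleftrightarrow> (\<exists>S. \<forall>x y. E x y \<longrightarrow> (x \<in> S \<longleftrightarrow> y \<notin> S))"

end

theory Submission
  imports Defs
begin

lemma dim1_basis:
  fixes S :: "(real ^ 'n) set"
  assumes "dim S = 1"
  obtains v where "v \<in> S" "v \<noteq> 0" "\<And>f. f \<in> S \<Longrightarrow> \<exists>c. f = c *\<^sub>R v"
proof -
  obtain B where B: "B \<subseteq> S" "independent B" "S \<subseteq> span B" "card B = dim S"
    using basis_exists by blast
  then obtain v where "B = {v}" using assms by (metis card_1_singletonE)
  with B show ?thesis
    by (intro that) (auto simp: span_singleton)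
qed

lemma mv_adj:
  fixes E :: "'a::finite \<Rightarrow> 'a \<Rightarrow> bool"
  shows "(adjacency_matrix E *v f) $ i = (\<Sum>j\<in>{j. E i j}. f $ j)"
proof -
  have "(adjacency_matrix E *v f) $ i = (\<Sum>j\<in>UNIV. if E i j then f $ j else 0)"
    by (simp add: adjacency_matrix_def matrix_vector_mult_def) (rule sum.cong, auto)
  also have "\<dots> = (\<Sum>j\<in>{j\<in>UNIV. E i j}. f $ j)"
    by (rule sum.inter_filter[symmetric]) simp
  finally show ?thesis by simp
qed

lemma mv_aut:
  fixes E :: "'a::finite \<Rightarrow> 'a \<Rightarrow> bool"
  assumes "graph_automorphism E \<sigma>"
  shows "(adjacency_matrix E *v (\<chi> j. f $ (\<sigma> j))) $ i = (adjacency_matrix E *v f) $ (\<sigma> i)"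
proof -
  have b: "bij \<sigma>" and e: "\<And>x y. E x y \<longleftrightarrow> E (\<sigma> x) (\<sigma> y)"
    using assms by (auto simp: graph_automorphism_def)
  have "(adjacency_matrix E *v f) $ (\<sigma> i) = (\<Sum>k\<in>UNIV. (if E (\<sigma> i) k then 1 else 0) * f $ k)"
    by (simp add: adjacency_matrix_def matrix_vector_mult_def)
  also have "\<dots> = (\<Sum>j\<in>UNIV. (if E (\<sigma> i) (\<sigma> j) then 1 else 0) * f $ (\<sigma> j))"
    using b by (subst sum.reindex_bij_betw[symmetric, of \<sigma> UNIV UNIV]) auto
  also have "\<dots> = (adjacency_matrix E *v (\<chi> j. f $ (\<sigma> j))) $ i"
    by (simp add: adjacency_matrix_def matrix_vector_mult_def e[symmetric])
  finally show ?thesis by simp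
qed

lemma eig_iff: "f \<in> eigenspace A c \<longleftrightarrow> (\<forall>i. (A *v f) $ i = c * f $ i)"
  by (simp add: eigenspace_def vec_eq_iff)

lemma local3:
  fixes a b c :: 'a and u w :: "'a \<Rightarrow> real"
  assumes "a \<noteq> b" "b \<noteq> c" "a \<noteq> c"
   and "\<forall>y\<in>{x,a,b,c}. u y = 1 \<or> u y = -1" "\<forall>y\<in>{x,a,b,c}. w y = 1 \<or> w y = -1"
   and "u a + u b + u c = u x" "w a + w b + w c = - w x"
  shows "u a * w a + u b * w b + u c * w c = u x * w x \<or>
     (u a * w a = - (u x * w x) \<and> u b * w b = - (u x * w x) \<and> u c * w c = - (u x * w x))"
  using assms by auto


lemma eig_scale:
  fixes E :: "'a::finite \<Rightarrow> 'a \<Rightarrow> bool"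
  assumes "v \<in> eigenspace (adjacency_matrix E) l"
  shows "c *\<^sub>R v \<in> eigenspace (adjacency_matrix E) l"
  using assms by (simp add: eig_iff mv_adj sum_distrib_left[symmetric])

lemma simple_pm:
  fixes E :: "'a::finite \<Rightarrow> 'a \<Rightarrow> bool"
  assumes vt: "vertex_transitive E" and se: "simple_eigenvalue (adjacency_matrix E) l"
  obtains u where "u \<in> eigenspace (adjacency_matrix E) l" "\<forall>x. u$x = 1 \<or> u$x = -1"
     "\<forall>f \<in> eigenspace (adjacency_matrix E) l. \<exists>c. f = c *\<^sub>R u"
     "\<And>\<sigma>. graph_automorphism E \<sigma> \<Longrightarrow> \<exists>s. (s = 1 \<or> s = -1) \<and> (\<forall>x. u$(\<sigma> x) = s * u$x)"
proof -
  let ?A = "adjacency_matrix E"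
  obtain v where v: "v \<in> eigenspace ?A l" "v \<noteq> 0" "\<And>f. f \<in> eigenspace ?A l \<Longrightarrow> \<exists>c. f = c *\<^sub>R v"
    using se dim1_basis unfolding simple_eigenvalue_def by blast
  have comp: "(\<chi> j. f $ (\<sigma> j)) \<in> eigenspace ?A l"
    if "graph_automorphism E \<sigma>" "f \<in> eigenspace ?A l" for \<sigma> f
    using that by (simp add: eig_iff mv_aut)
  obtain j0 where j0: "v $ j0 \<noteq> 0" using v(2) by (auto simp: vec_eq_iff)
  have pos: "(\<Sum>j\<in>UNIV. (v$j)^2) > 0"
  proof -
    have "(v$j0)^2 \<le> (\<Sum>j\<in>UNIV. (v$j)^2)"
      by (rule member_le_sum) auto
    moreover have "(v$j0)^2 > 0" using j0 by simp
    ultimately show ?thesis by linarith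
  qed
  have absinv: "\<bar>v $ (\<sigma> j)\<bar> = \<bar>v $ j\<bar>" if aut: "graph_automorphism E \<sigma>" for \<sigma> j
  proof -
    obtain c where c: "(\<chi> j. v $ (\<sigma> j)) = c *\<^sub>R v" using v(3) comp[OF aut v(1)] by blast
    have cj: "\<And>j. v $ (\<sigma> j) = c * v $ j" using c by (simp add: vec_eq_iff)
    have b: "bij \<sigma>" using aut by (simp add: graph_automorphism_def)
    have "(\<Sum>j\<in>UNIV. (v$j)^2) = (\<Sum>j\<in>UNIV. (v$(\<sigma> j))^2)"
      using b by (subst sum.reindex_bij_betw[symmetric, of \<sigma> UNIV UNIV]) auto
    also have "\<dots> = c^2 * (\<Sum>j\<in>UNIV. (v$j)^2)"
      by (simp add: cj power_mult_distrib sum_distrib_left)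
    finally have "c^2 * (\<Sum>j\<in>UNIV. (v$j)^2) = 1 * (\<Sum>j\<in>UNIV. (v$j)^2)" by simp
    hence "c^2 = 1" using pos by (subst (asm) mult_cancel_right) simp
    hence "\<bar>c\<bar> = 1" by (simp add: power2_eq_1_iff) (auto)
    thus ?thesis by (simp add: cj abs_mult)
  qed
  define k where "k = \<bar>v $ j0\<bar>"
  have kpos: "k > 0" using j0 by (simp add: k_def)
  have absk: "\<bar>v $ x\<bar> = k" for x
  proof -
    obtain \<sigma> where s: "graph_automorphism E \<sigma>" "\<sigma> j0 = x" using vt unfolding vertex_transitive_def by blast
    have "\<bar>v$(\<sigma> j0)\<bar> = \<bar>v$j0\<bar>" by (rule absinv[OF s(1)])
    thus ?thesis using s(2) by (simp add: k_def)
  qed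
  define u where "u = (1/k) *\<^sub>R v"
  have u1: "u \<in> eigenspace ?A l" unfolding u_def by (rule eig_scale[OF v(1)])
  have u2: "\<forall>x. u$x = 1 \<or> u$x = -1"
  proof
    fix x
    have "\<bar>u$x\<bar> = 1" using absk[of x] kpos by (simp add: u_def abs_mult)
    thus "u$x = 1 \<or> u$x = -1" by linarith
  qed
  have u3: "\<forall>f \<in> eigenspace ?A l. \<exists>c. f = c *\<^sub>R u"
  proof
    fix f assume "f \<in> eigenspace ?A l"
    then obtain c where "f = c *\<^sub>R v" using v(3) by blast
    hence "f = (c * k) *\<^sub>R u" using kpos by (simp add: u_def)
    thus "\<exists>c. f = c *\<^sub>R u" by blast
  qed
  have u4: "\<exists>s. (s = 1 \<or> s = -1) \<and> (\<forall>x. u$(\<sigma> x) = s * u$x)"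
    if aut: "graph_automorphism E \<sigma>" for \<sigma>
  proof -
    obtain c where c: "(\<chi> j. u $ (\<sigma> j)) = c *\<^sub>R u" using u3 comp[OF aut u1] by blast
    have cj: "\<And>j. u $ (\<sigma> j) = c * u $ j" using c by (simp add: vec_eq_iff)
    have "c = 1 \<or> c = -1" using cj[of j0] u2[rule_format, of j0] u2[rule_format, of "\<sigma> j0"] by auto
    thus ?thesis using cj by blast
  qed
  show ?thesis by (rule that[OF u1 u2 u3 u4])
qed


theorem theorem3p1:
  fixes E :: "'a::finite \<Rightarrow> 'a \<Rightarrow> bool"
  assumes "simple_graph E"
    and "cubic E"
    and "vertex_transitive E"
    and "simple_eigenvalue (adjacency_matrix E) 1"
    and "simple_eigenvalue (adjacency_matrix E) (-1)"
  shows "bipartite E"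
proof -
  let ?A = "adjacency_matrix E"
  obtain u where u1: "u \<in> eigenspace ?A 1" and u2: "\<forall>x. u$x = 1 \<or> u$x = -1"
     and u3: "\<forall>f \<in> eigenspace ?A 1. \<exists>c. f = c *\<^sub>R u"
     and u4: "\<And>\<sigma>. graph_automorphism E \<sigma> \<Longrightarrow> \<exists>s. (s = 1 \<or> s = -1) \<and> (\<forall>x. u$(\<sigma> x) = s * u$x)"
    by (rule simple_pm[OF assms(3) assms(4)], rule that, assumption+)
  obtain w where w1: "w \<in> eigenspace ?A (-1)" and w2: "\<forall>x. w$x = 1 \<or> w$x = -1"
     and w3: "\<forall>f \<in> eigenspace ?A (-1). \<exists>c. f = c *\<^sub>R w"
     and w4: "\<And>\<sigma>. graph_automorphism E \<sigma> \<Longrightarrow> \<exists>s. (s = 1 \<or> s = -1) \<and> (\<forall>x. w$(\<sigma> x) = s * w$x)"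
    by (rule simple_pm[OF assms(3) assms(5)], rule that, assumption+)
  define p where "p = (\<chi> x. u$x * w$x)"
  have p2: "p$x = 1 \<or> p$x = -1" for x using u2[rule_format, of x] w2[rule_format, of x] by (auto simp: p_def)
  have ueq: "(\<Sum>y\<in>{y. E x y}. u$y) = u$x" for x using u1 by (simp add: eig_iff mv_adj)
  have weq: "(\<Sum>y\<in>{y. E x y}. w$y) = - w$x" for x using w1 by (simp add: eig_iff mv_adj)
  have loc: "(\<Sum>y\<in>{y. E x y}. p$y) = p$x \<or> (\<forall>y\<in>{y. E x y}. p$y = - p$x)" for x
  proof -
    obtain a b c where abc: "{y. E x y} = {a,b,c}" "a \<noteq> b" "b \<noteq> c" "a \<noteq> c"
      using assms(2) unfolding cubic_def card_3_iff by blast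
    have "(u$a) + (u$b) + (u$c) = u$x" using ueq[of x] abc by simp
    moreover have "(w$a) + (w$b) + (w$c) = - w$x" using weq[of x] abc by simp
    ultimately have "(u$a)*(w$a) + (u$b)*(w$b) + (u$c)*(w$c) = (u$x)*(w$x) \<or>
     ((u$a)*(w$a) = - ((u$x)*(w$x)) \<and> (u$b)*(w$b) = - ((u$x)*(w$x)) \<and> (u$c)*(w$c) = - ((u$x)*(w$x)))"
      using local3[of a b c x "\<lambda>y. u$y" "\<lambda>y. w$y"] abc u2 w2 by auto
    thus ?thesis using abc by (auto simp: p_def)
  qed
  have notboth: "\<not> ((\<Sum>y\<in>{y. E x y}. p$y) = p$x \<and> (\<forall>y\<in>{y. E x y}. p$y = - p$x))" for x
  proof
    assume h: "(\<Sum>y\<in>{y. E x y}. p$y) = p$x \<and> (\<forall>y\<in>{y. E x y}. p$y = - p$x)"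
    hence "(\<Sum>y\<in>{y. E x y}. p$y) = (\<Sum>y\<in>{y. E x y}. - p$x)" by simp
    also have "\<dots> = - 3 * p$x" using assms(2) by (simp add: cubic_def)
    finally show False using h p2[of x] by auto
  qed
  define good where "good x \<longleftrightarrow> (\<Sum>y\<in>{y. E x y}. p$y) = p$x" for x
  have inv: "good (\<sigma> x) \<longleftrightarrow> good x" if aut: "graph_automorphism E \<sigma>" for \<sigma> x
  proof -
    obtain s where s: "s = 1 \<or> s = -1" "\<forall>x. u$(\<sigma> x) = s * u$x" using u4[OF aut] by blast
    obtain t where t: "t = 1 \<or> t = -1" "\<forall>x. w$(\<sigma> x) = t * w$x" using w4[OF aut] by blast
    have ps: "(\<chi> j. p $ (\<sigma> j)) = (s*t) *\<^sub>R p" using s t by (simp add: vec_eq_iff p_def)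
    have "(\<Sum>y\<in>{y. E (\<sigma> x) y}. p$y) = (?A *v p) $ (\<sigma> x)" by (simp add: mv_adj)
    also have "\<dots> = (?A *v (\<chi> j. p $ (\<sigma> j))) $ x" by (simp add: mv_aut[OF aut])
    also have "\<dots> = (s*t) * (\<Sum>y\<in>{y. E x y}. p$y)" by (simp add: ps mv_adj sum_distrib_left)
    finally have e1: "(\<Sum>y\<in>{y. E (\<sigma> x) y}. p$y) = (s*t) * (\<Sum>y\<in>{y. E x y}. p$y)" .
    have e2: "p $ (\<sigma> x) = (s*t) * p$x" using s t by (simp add: p_def)
    have "s*t \<noteq> 0" using s t by auto
    thus ?thesis unfolding good_def e1 e2 by simp
  qed
  show ?thesis
  proof (cases "\<exists>x0. good x0")
    case True
    then obtain x0 where x0: "good x0" by blast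
    have allg: "good x" for x
    proof -
      obtain \<sigma> where s: "graph_automorphism E \<sigma>" "\<sigma> x0 = x"
        using assms(3) unfolding vertex_transitive_def by blast
      show ?thesis using inv[OF s(1), of x0] s(2) x0 by simp
    qed
    have "p \<in> eigenspace ?A 1" using allg by (simp add: eig_iff mv_adj good_def)
    then obtain c where c: "p = c *\<^sub>R u" using u3 by blast
    have wc: "w$x = c" for x
    proof -
      have "u$x * w$x = c * u$x" using c by (simp add: vec_eq_iff p_def)
      thus ?thesis using u2[rule_format, of x] by auto
    qed
    obtain x1 :: 'a where True by blast
    have c3: "card {y. E x1 y} = 3" using assms(2) by (simp add: cubic_def)
    have "(\<Sum>y\<in>{y. E x1 y}. w$y) = 3 * c" by (simp add: wc c3)
    moreover have "(\<Sum>y\<in>{y. E x1 y}. w$y) = - c" using weq[of x1] wc[of x1] by simp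
    ultimately have "3 * c = - c" by simp
    hence "c = 0" by simp
    thus ?thesis using w2 wc by auto
  next
    case False
    hence bad: "\<forall>y\<in>{y. E x y}. p$y = - p$x" for x using loc[of x] good_def by blast
    show ?thesis unfolding bipartite_def
    proof (intro exI allI impI)
      fix x y assume "E x y"
      hence "p$y = - p$x" using bad[of x] by simp
      thus "x \<in> {z. p$z = 1} \<longleftrightarrow> y \<notin> {z. p$z = 1}" using p2[of x] p2[of y] by auto
    qed
  qed
qed

end
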